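(* Let $\Bbbk$ be a field, $n\ge2$, $q\in\Bbbk$ a primitive $n$-th root of unity, $T_n(q)$ the Taft algebra and $A$ a unital associative $\Bbbk$-algebra. Let $\cdot:T_n(q)\otimes A\to A$ be a linear map with $1\cdot1_A=1_A$ and $g^i\cdot1_A=0$ for all $1\le i<n$. Then $\cdot$ is a partial action of $T_n(q)$ on $A$ if and only if $(x\cdot1_A)^n\in Z(A)$ and $$g^{n-i}x^j\cdot a=(-1)^iq^{\frac{i(i+1)}{2}}\binom{j}{i}_q(x\cdot1_A)^{j-i}a(x\cdot1_A)^i$$ for all $a\in A$ and $0\le i,j<n$.
   Context: The Taft algebra $T_n(q)$ is the Hopf algebra generated by $g,x$ with relations $g^n=1$, $x^n=0$, $xg=qgx$ (so $g^n=1$), basis $\{g^ix^j:0\le i,j<n\}$, $g$ group-like, $\Delta(x)=x\otimes1+g\otimes x$, $\varepsilon(x)=0$. $Z(A)$ is the center of $A$. A partial action of a bialgebra $H$ on $A$ is a linear map $\cdot:H\otimes A\to A$ with $1_H\cdot a=a$, $h\cdot(ab)=(h_1\cdot a)(h_2\cdot b)$, $h\cdot(k\cdot a)=(h_1\cdot1_A)(h_2k\cdot a)$. $q$-binomials: $\binom{0}{0}_p=1$, $\binom{N}{m}_p=0$ if $m>N$ or $m<0$, and $\binom{N}{m}_p=\binom{N-1}{m-1}_p+p^m\binom{N-1}{m}_p$ for $N\ge1$, $0\le m\le N$. *)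

theory Defs
  imports Complex_Main
begin

definition prim_root :: "nat \<Rightarrow> 'k::field \<Rightarrow> bool" where
  "prim_root n q \<longleftrightarrow> q ^ n = 1 \<and> (\<forall>m. 0 < m \<and> m < n \<longrightarrow> q ^ m \<noteq> 1)"

text \<open>q-binomial coefficients, by the recursion of the paper (m ranges over naturals;
  the case m < 0 never arises).\<close>
fun qbinom :: "'k::comm_ring_1 \<Rightarrow> nat \<Rightarrow> nat \<Rightarrow> 'k" where
  "qbinom p 0 m = (if m = 0 then 1 else 0)"
| "qbinom p (Suc N) m =
     (if m > Suc N then 0
      else (if m = 0 then 0 else qbinom p N (m - 1)) + p ^ m * qbinom p N m)"

text \<open>Unital associative k-algebra structure on a ring 'a, given by a scalar multiplication.\<close>
definition k_algebra :: "('k::field \<Rightarrow> 'a::ring_1 \<Rightarrow> 'a) \<Rightarrow> bool" where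
  "k_algebra scale \<longleftrightarrow> Vector_Spaces.vector_space scale \<and>
     (\<forall>c a b. scale c (a * b) = scale c a * b \<and> scale c (a * b) = a * scale c b)"

definition center :: "'a::ring_1 set" where
  "center = {z. \<forall>a. z * a = a * z}"

text \<open>The Taft algebra T_n(q): an element is its coefficient function w.r.t. the basis
  g^i x^j (0 <= i,j < n), a pair (i,j) standing for g^i x^j.\<close>
type_synonym 'k taft = "nat \<times> nat \<Rightarrow> 'k"
type_synonym 'k taft2 = "(nat \<times> nat) \<times> (nat \<times> nat) \<Rightarrow> 'k"

definition idx :: "nat \<Rightarrow> (nat \<times> nat) set" where
  "idx n = {..<n} \<times> {..<n}"

definition taft_elem :: "nat \<Rightarrow> 'k::field taft \<Rightarrow> bool" where
  "taft_elem n h \<longleftrightarrow> (\<forall>p. p \<notin> idx n \<longrightarrow> h p = 0)"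

text \<open>basis element g^i x^j (g^n = 1, x^n = 0)\<close>
definition taft_basis :: "nat \<Rightarrow> nat \<Rightarrow> nat \<Rightarrow> 'k::field taft" where
  "taft_basis n i j = (\<lambda>p. if p = (i mod n, j) \<and> j < n then 1 else 0)"

text \<open>structure constants: (g^i x^j)(g^k x^l) = q^(jk) g^(i+k) x^(j+l), using x g = q g x\<close>
definition taft_sc :: "nat \<Rightarrow> 'k::field \<Rightarrow> nat \<times> nat \<Rightarrow> nat \<times> nat \<Rightarrow> nat \<times> nat \<Rightarrow> 'k" where
  "taft_sc n q u v w =
     (if (fst u + fst v) mod n = fst w \<and> snd u + snd v = snd w \<and> snd w < n
      then q ^ (snd u * fst v) else 0)"

definition taft_mul :: "nat \<Rightarrow> 'k::field \<Rightarrow> 'k taft \<Rightarrow> 'k taft \<Rightarrow> 'k taft" where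
  "taft_mul n q h k = (\<lambda>w. \<Sum>u\<in>idx n. \<Sum>v\<in>idx n. h u * k v * taft_sc n q u v w)"

text \<open>T_n(q) \<otimes> T_n(q) with componentwise multiplication\<close>
definition tt_mul :: "nat \<Rightarrow> 'k::field \<Rightarrow> 'k taft2 \<Rightarrow> 'k taft2 \<Rightarrow> 'k taft2" where
  "tt_mul n q F G = (\<lambda>w. \<Sum>u\<in>idx n. \<Sum>u'\<in>idx n. \<Sum>v\<in>idx n. \<Sum>v'\<in>idx n.
      F (u, v) * G (u', v') * taft_sc n q u u' (fst w) * taft_sc n q v v' (snd w))"

definition tt_basis :: "nat \<times> nat \<Rightarrow> nat \<times> nat \<Rightarrow> 'k::field taft2" where
  "tt_basis u v = (\<lambda>w. if w = (u, v) then 1 else 0)"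

definition tt_pow :: "nat \<Rightarrow> 'k::field \<Rightarrow> 'k taft2 \<Rightarrow> nat \<Rightarrow> 'k taft2" where
  "tt_pow n q F m = (tt_mul n q F ^^ m) (tt_basis (0,0) (0,0))"

text \<open>Comultiplication: the algebra map with \<Delta>(g) = g \<otimes> g and \<Delta>(x) = x \<otimes> 1 + g \<otimes> x,
  so \<Delta>(g^i x^j) = \<Delta>(g)^i \<Delta>(x)^j; extended linearly.\<close>
definition taft_comult_basis :: "nat \<Rightarrow> 'k::field \<Rightarrow> nat \<Rightarrow> nat \<Rightarrow> 'k taft2" where
  "taft_comult_basis n q i j =
     tt_mul n q (tt_pow n q (tt_basis (1,0) (1,0)) i)
       (tt_pow n q (\<lambda>w. tt_basis (0,1) (0,0) w + tt_basis (1,0) (0,1) w) j)"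

definition taft_comult :: "nat \<Rightarrow> 'k::field \<Rightarrow> 'k taft \<Rightarrow> 'k taft2" where
  "taft_comult n q h = (\<lambda>w. \<Sum>u\<in>idx n. h u * taft_comult_basis n q (fst u) (snd u) w)"

text \<open>A linear map T_n(q) \<otimes> A \<rightarrow> A is given by act i j a = (g^i x^j) \<cdot> a, each act i j
  linear; its value on h \<otimes> a is act_lin.\<close>
definition act_lin :: "('k::field \<Rightarrow> 'a::ring_1 \<Rightarrow> 'a) \<Rightarrow> (nat \<Rightarrow> nat \<Rightarrow> 'a \<Rightarrow> 'a)
    \<Rightarrow> nat \<Rightarrow> 'k taft \<Rightarrow> 'a \<Rightarrow> 'a" where
  "act_lin scale act n h a = (\<Sum>u\<in>idx n. scale (h u) (act (fst u) (snd u) a))"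

definition partial_action :: "nat \<Rightarrow> 'k::field \<Rightarrow> ('k \<Rightarrow> 'a::ring_1 \<Rightarrow> 'a)
    \<Rightarrow> (nat \<Rightarrow> nat \<Rightarrow> 'a \<Rightarrow> 'a) \<Rightarrow> bool" where
  "partial_action n q scale act \<longleftrightarrow>
     (\<forall>a. act_lin scale act n (taft_basis n 0 0) a = a) \<and>
     (\<forall>h a b. taft_elem n h \<longrightarrow>
        act_lin scale act n h (a * b) =
          (\<Sum>u\<in>idx n. \<Sum>v\<in>idx n. scale (taft_comult n q h (u, v))
              (act (fst u) (snd u) a * act (fst v) (snd v) b))) \<and>
     (\<forall>h k a. taft_elem n h \<longrightarrow> taft_elem n k \<longrightarrow>
        act_lin scale act n h (act_lin scale act n k a) =
          (\<Sum>u\<in>idx n. \<Sum>v\<in>idx n. scale (taft_comult n q h (u, v))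
              (act (fst u) (snd u) 1 *
               act_lin scale act n (taft_mul n q (taft_basis n (fst v) (snd v)) k) a)))"

end

theory Submission
  imports Defs
begin

lemma qb_gt: "N < m \<Longrightarrow> qbinom p N m = 0"
  by (cases N) auto
lemma qb_0[simp]: "qbinom p N 0 = 1"
  by (induction N) auto
lemma qb_pascal: "qbinom p (Suc N) (Suc m) = qbinom p N m + p^(Suc m) * qbinom p N (Suc m)"
  by (auto simp: qb_gt)
lemma qb_diag[simp]: "qbinom p N N = 1"
  by (induction N) (auto simp: qb_gt)

lemma qb_prod: "qbinom p N r * (\<Prod>t\<in>{1..r}. 1 - p^t) = (\<Prod>t<r. 1 - p^(N-t))"
proof (induction N arbitrary: r)
  case 0
  then show ?case by (cases r) (auto simp: prod.lessThan_Suc_shift)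
next
  case (Suc N)
  show ?case
  proof (cases r)
    case 0 then show ?thesis by simp
  next
    case (Suc s)
    have P1: "(\<Prod>t<Suc s. 1 - p^(Suc N - t)) = (1 - p^(Suc N)) * (\<Prod>t<s. 1 - p^(N-t))"
      by (subst prod.lessThan_Suc_shift) simp
    have P2: "(\<Prod>t<Suc s. 1 - p^(N - t)) = (\<Prod>t<s. 1 - p^(N-t)) * (1 - p^(N-s))"
      by simp
    have Q: "(\<Prod>t\<in>{1..Suc s}. 1 - p^t) = (\<Prod>t\<in>{1..s}. 1 - p^t) * (1 - p^(Suc s))"
      by simp
    have key: "(\<Prod>t<s. 1 - p^(N-t)) * (1 - p^(N-s)) * p^(Suc s) = (\<Prod>t<s. 1 - p^(N-t)) * (p^(Suc s) - p^(Suc N))"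
    proof (cases "s \<le> N")
      case True
      then have "p^(N-s) * p^(Suc s) = p^(Suc N)" by (simp only: power_add[symmetric]) simp
      then show ?thesis by (simp add: algebra_simps) (metis mult.assoc)
    next
      case False
      then have "(\<Prod>t<s. 1 - p^(N-t)) = 0"
        by (intro prod_zero) (auto intro!: bexI[of _ N])
      then show ?thesis by simp
    qed
    have "qbinom p (Suc N) r * (\<Prod>t\<in>{1..r}. 1 - p^t)
      = (qbinom p N s * (\<Prod>t\<in>{1..s}. 1 - p^t)) * (1 - p^(Suc s))
        + p^(Suc s) * (qbinom p N (Suc s) * (\<Prod>t\<in>{1..Suc s}. 1 - p^t))"
      using Suc by (simp only: qb_pascal Q) (simp add: algebra_simps)
    also have "\<dots> = (\<Prod>t<s. 1 - p^(N-t)) * (1 - p^(Suc s)) + p^(Suc s) * ((\<Prod>t<s. 1 - p^(N-t)) * (1 - p^(N-s)))"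
      by (simp only: Suc.IH P2)
    also have "\<dots> = (1 - p^(Suc N)) * (\<Prod>t<s. 1 - p^(N-t))"
      using key by (simp add: algebra_simps)
    finally show ?thesis using Suc P1 by simp
  qed
qed

lemma prim_q_n: "prim_root n q \<Longrightarrow> q^n = 1" by (simp add: prim_root_def)

lemma prim_pow_mod: "prim_root n q \<Longrightarrow> q^k = q^(k mod n)"
proof -
  assume "prim_root n q"
  then have "q^n = 1" by (simp add: prim_root_def)
  have "q^k = q^(n * (k div n) + k mod n)" by simp
  also have "\<dots> = (q^n)^(k div n) * q^(k mod n)" by (simp only: power_add power_mult)
  also have "\<dots> = q^(k mod n)" using \<open>q^n = 1\<close> by simp
  finally show ?thesis .
qed

lemma qb_n_zero:
  assumes "prim_root n q" "0 < r" "r < n"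
  shows "qbinom q n r = 0"
proof -
  have "(\<Prod>t<r. 1 - q^(n-t)) = 0"
    using assms by (intro prod_zero) (auto simp: prim_root_def intro!: bexI[of _ 0])
  moreover have "(\<Prod>t\<in>{1..r}. 1 - q^t) \<noteq> 0"
    using assms by (auto simp: prim_root_def)
  ultimately show ?thesis using qb_prod[of q n r] by (metis mult_eq_0_iff)
qed

lemma tri_suc: "Suc s * (Suc s + 1) div 2 = s * (s+1) div 2 + Suc s"
proof -
  have "Suc s * (Suc s + 1) = s * (s+1) + 2 * Suc s" by (simp add: algebra_simps)
  then show ?thesis by simp
qed

lemma cc_last:
  assumes "prim_root n q" "2 \<le> n"
  shows "(-1::'k::field)^(n-1) * q^((n-1)*(n-1+1) div 2) = 1"
proof (cases "even n")
  case True
  then obtain k where k: "n = 2*k" by blast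
  with assms have k1: "1 \<le> k" "k < n" by auto
  have "(q^k)^2 = 1" using assms k by (simp add: prim_root_def power_mult[symmetric] mult.commute)
  moreover have "q^k \<noteq> 1" using assms k1 by (simp add: prim_root_def)
  ultimately have qk: "q^k = -1"
    by (metis (no_types, lifting) power2_eq_1_iff)
  have e: "(n-1)*(n-1+1) div 2 = k * (n-1)" using k k1 by (simp add: algebra_simps)
  have "odd (n-1)" using True assms by simp
  then show ?thesis using e qk by (simp add: power_mult)
next
  case False
  then obtain k where k: "n = 2*k+1" using oddE by blast
  have e: "(n-1)*(n-1+1) div 2 = k * n" using k by (simp add: algebra_simps)
  have "q^(k*n) = 1" using assms by (simp add: prim_root_def power_mult mult.commute[of k])
  moreover have "(-1::'k)^(n-1) = 1" using k by simp
  ultimately show ?thesis by (simp only: e) simp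
qed
declare qbinom.simps[simp del]

abbreviation "I2 n \<equiv> idx n \<times> idx n"

lemma sum_pair: "(\<Sum>p\<in>A\<times>B. f p) = (\<Sum>x\<in>A. \<Sum>y\<in>B. f (x,y))"
  by (subst sum.cartesian_product) (simp add: split_def)

lemma TT_def': "tt_mul n q F G w = (\<Sum>p\<in>I2 n. \<Sum>p'\<in>I2 n. F p * G p' * taft_sc n q (fst p) (fst p') (fst w) * taft_sc n q (snd p) (snd p') (snd w))"
  unfolding tt_mul_def sum_pair fst_conv snd_conv
  by (rule sum.cong[OF refl]) (rule sum.swap)

lemma if01_mult: "(if P then 1 else 0) * (x::'a::semiring_1) = (if P then x else 0)" by simp
lemma if0_mult: "(if P then x else 0) * (y::'a::semiring_1) = (if P then x * y else 0)" by simp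
lemma fin_idx[simp]: "finite (idx n)" by (simp add: idx_def)

lemma TT_delta_left:
  assumes "p0 \<in> I2 n"
  shows "tt_mul n q (tt_basis (fst p0) (snd p0)) G w = (\<Sum>p'\<in>I2 n. G p' * taft_sc n q (fst p0) (fst p') (fst w) * taft_sc n q (snd p0) (snd p') (snd w))"
  unfolding TT_def'
  apply (subst sum.swap)
  using assms apply (simp add: tt_basis_def if01_mult if0_mult sum.delta mult.assoc)
  done

lemma TT_delta_both:
  assumes "p0 \<in> I2 n" "p1 \<in> I2 n"
  shows "tt_mul n q (tt_basis (fst p0) (snd p0)) (tt_basis (fst p1) (snd p1)) w = taft_sc n q (fst p0) (fst p1) (fst w) * taft_sc n q (snd p0) (snd p1) (snd w)"
  unfolding TT_delta_left[OF assms(1)]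
  using assms(2) by (simp add: tt_basis_def if01_mult if0_mult sum.delta mult.assoc)

lemma TT_add_left: "tt_mul n q (\<lambda>p. F1 p + F2 p) G w = tt_mul n q F1 G w + tt_mul n q F2 G w"
  unfolding TT_def' by (simp add: algebra_simps sum.distrib)

lemma TT_sum_right: "finite T \<Longrightarrow> tt_mul n q F (\<lambda>p. \<Sum>t\<in>T. c t * G t p) w = (\<Sum>t\<in>T. c t * tt_mul n q F (G t) w)"
  unfolding TT_def' by (simp add: sum_distrib_left sum_distrib_right sum.swap[of _ T] algebra_simps)

lemma TT_dd:
  "u \<in> idx n \<Longrightarrow> v \<in> idx n \<Longrightarrow> u' \<in> idx n \<Longrightarrow> v' \<in> idx n \<Longrightarrow>
   tt_mul n q (tt_basis u v) (tt_basis u' v') w = taft_sc n q u u' (fst w) * taft_sc n q v v' (snd w)"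
  using TT_delta_both[of "(u,v)" n "(u',v')"] by simp

lemma pascal_sum_k:
  "(\<Sum>l\<le>Suc j. qbinom (q::'k::field) (Suc j) l * F l) =
     (\<Sum>l\<le>j. qbinom q j l * F (Suc l)) + (\<Sum>l\<le>j. q^l * qbinom q j l * F l)"
proof -
  have "(\<Sum>l\<le>Suc j. qbinom q (Suc j) l * F l) =
      (\<Sum>l\<le>j. qbinom q j l * F (Suc l)) + (F 0 + (\<Sum>l\<le>j. q^(Suc l) * qbinom q j (Suc l) * F (Suc l)))"
    by (subst sum.atMost_Suc_shift) (simp add: qb_pascal sum.distrib algebra_simps)
  also have "F 0 + (\<Sum>l\<le>j. q^(Suc l) * qbinom q j (Suc l) * F (Suc l)) = (\<Sum>l\<le>Suc j. q^l * qbinom q j l * F l)"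
    by (simp only: sum.atMost_Suc_shift) simp
  also have "\<dots> = (\<Sum>l\<le>j. q^l * qbinom q j l * F l)"
    by (simp add: qb_gt)
  finally show ?thesis .
qed

lemma tt_pow_Suc: "tt_pow n q F (Suc m) = tt_mul n q F (tt_pow n q F m)"
  by (simp add: tt_pow_def)

lemma G_pow:
  assumes "2 \<le> n"
  shows "tt_pow n q (tt_basis (1,0) (1,0)) i = tt_basis (i mod n, 0) (i mod n, 0)"
proof (induction i)
  case 0 then show ?case by (simp add: tt_pow_def)
next
  case (Suc i)
  have m: "i mod n < n" using assms by simp
  show ?case
  proof (rule ext)
    fix w :: "(nat \<times> nat) \<times> nat \<times> nat"
    obtain a b c d where w: "w = ((a,b),(c,d))" by (metis prod.collapse)
    have "tt_pow n q (tt_basis (1,0) (1,0)) (Suc i) w = taft_sc n q (1,0) (i mod n, 0) (fst w) * taft_sc n q (1,0) (i mod n, 0) (snd w)"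
      unfolding tt_pow_Suc Suc.IH using assms m by (intro TT_dd) (auto simp: idx_def)
    also have "\<dots> = tt_basis (Suc i mod n, 0) (Suc i mod n, 0) w"
    proof -
      have key: "Suc (i mod n) mod n = Suc i mod n" by (simp add: mod_Suc_eq)
      show ?thesis using assms by (simp add: w taft_sc_def tt_basis_def key)
    qed
    finally show "tt_pow n q (tt_basis (1,0) (1,0)) (Suc i) w = tt_basis (Suc i mod n, 0) (Suc i mod n, 0) w" .
  qed
qed

abbreviation "Dx \<equiv> (\<lambda>w. tt_basis (0,1) (0,0) w + tt_basis (1,0) (0,1) w)"

lemma X_pow:
  assumes "2 \<le> n"
  shows "j < n \<Longrightarrow> tt_pow n (q::'k::field) Dx j = (\<lambda>p. \<Sum>l\<le>j. qbinom q j l * tt_basis (l, j-l) (0,l) p)"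
proof (induction j)
  case 0 then show ?case by (simp add: tt_pow_def)
next
  case (Suc j)
  show ?case
  proof (rule ext)
    fix w :: "(nat \<times> nat) \<times> nat \<times> nat"
    obtain a b c d where w: "w = ((a,b),(c,d))" by (metis prod.collapse)
    have "tt_pow n q Dx (Suc j) w = (\<Sum>l\<le>j. qbinom q j l * (tt_mul n q (tt_basis (0,1) (0,0)) (tt_basis (l, j-l) (0,l)) w
         + tt_mul n q (tt_basis (1,0) (0,1)) (tt_basis (l, j-l) (0,l)) w))"
      unfolding tt_pow_Suc Suc.IH[OF Suc_lessD[OF Suc.prems]] TT_add_left
      by (simp add: TT_sum_right sum.distrib algebra_simps)
    also have "\<dots> = (\<Sum>l\<le>j. qbinom q j l * (q^l * tt_basis (l, Suc j - l) (0,l) w + tt_basis (Suc l, Suc j - Suc l) (0, Suc l) w))"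
    proof (intro sum.cong refl)
      fix l assume "l \<in> {..j}"
      then have l: "l \<le> j" by simp
      have i1: "tt_mul n q (tt_basis (0,1) (0,0)) (tt_basis (l, j-l) (0,l)) w = q^l * tt_basis (l, Suc j - l) (0,l) w"
        using assms Suc.prems l
        by (subst TT_dd) (auto simp: idx_def w taft_sc_def tt_basis_def Suc_diff_le)
      have i2: "tt_mul n q (tt_basis (1,0) (0,1)) (tt_basis (l, j-l) (0,l)) w = tt_basis (Suc l, Suc j - Suc l) (0, Suc l) w"
        using assms Suc.prems l
        by (subst TT_dd) (auto simp: idx_def w taft_sc_def tt_basis_def)
      show "qbinom q j l * (tt_mul n q (tt_basis (0,1) (0,0)) (tt_basis (l, j-l) (0,l)) w
         + tt_mul n q (tt_basis (1,0) (0,1)) (tt_basis (l, j-l) (0,l)) w) =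
         qbinom q j l * (q^l * tt_basis (l, Suc j - l) (0,l) w + tt_basis (Suc l, Suc j - Suc l) (0, Suc l) w)"
        by (simp only: i1 i2)
    qed
    also have "\<dots> = (\<Sum>l\<le>Suc j. qbinom q (Suc j) l * tt_basis (l, Suc j - l) (0,l) w)"
      by (subst pascal_sum_k) (simp add: algebra_simps sum.distrib)
    finally show "tt_pow n q Dx (Suc j) w = (\<Sum>l\<le>Suc j. qbinom q (Suc j) l * tt_basis (l, Suc j - l) (0,l) w)" .
  qed
qed

lemma CB:
  assumes "2 \<le> n" "i < n" "j < n"
  shows "taft_comult_basis n (q::'k::field) i j w = (\<Sum>l\<le>j. qbinom q j l * tt_basis ((i+l) mod n, j-l) (i,l) w)"
proof -
  have "taft_comult_basis n q i j w = (\<Sum>l\<le>j. qbinom q j l * tt_mul n q (tt_basis (i,0) (i,0)) (tt_basis (l, j-l) (0,l)) w)"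
    unfolding taft_comult_basis_def G_pow[OF assms(1)] X_pow[OF assms(1,3)]
    using assms by (simp add: TT_sum_right)
  also have "\<dots> = (\<Sum>l\<le>j. qbinom q j l * tt_basis ((i+l) mod n, j-l) (i,l) w)"
  proof (intro sum.cong refl)
    fix l assume "l \<in> {..j}"
    then have l: "l \<le> j" by simp
    obtain a b c d where w: "w = ((a,b),(c,d))" by (metis prod.collapse)
    show "qbinom q j l * tt_mul n q (tt_basis (i,0) (i,0)) (tt_basis (l, j-l) (0,l)) w = qbinom q j l * tt_basis ((i+l) mod n, j-l) (i,l) w"
      using assms l by (subst TT_dd) (auto simp: idx_def w taft_sc_def tt_basis_def)
  qed
  finally show ?thesis .
qed

locale S =
  fixes n :: nat and q :: "'k::field" and scale :: "'k \<Rightarrow> 'a::ring_1 \<Rightarrow> 'a"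
    and act :: "nat \<Rightarrow> nat \<Rightarrow> 'a \<Rightarrow> 'a"
  assumes n2: "2 \<le> n" and prim: "prim_root n q" and alg: "k_algebra scale"
    and lin: "\<And>i j. Vector_Spaces.linear scale scale (act i j)"
begin

sublocale V: vector_space scale using alg by (simp add: k_algebra_def)

lemma sm1[simp]: "scale c x * z = scale c (x * z)"
  using alg by (simp add: k_algebra_def)
lemma sm2[simp]: "x * scale c z = scale c (x * z)"
  using alg by (simp add: k_algebra_def)

lemma act_hom: "module_hom scale scale (act i j)"
  using lin by (simp add: module_hom_iff_linear)
lemma act_add[simp]: "act i j (x + z) = act i j x + act i j z"
  using module_hom.add[OF act_hom] .
lemma act_scale[simp]: "act i j (scale c x) = scale c (act i j x)"
  using module_hom.scale[OF act_hom] .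
lemma act_zero[simp]: "act i j 0 = 0"
  using module_hom.zero[OF act_hom] .
lemma act_diff[simp]: "act i j (x - z) = act i j x - act i j z"
  using module_hom.diff[OF act_hom] .
lemma act_sum: "act i j (sum f A) = (\<Sum>x\<in>A. act i j (f x))"
  using module_hom.sum[OF act_hom] .

lemma q_n: "q^n = 1" using prim by (simp add: prim_root_def)
lemma q_nz: "q \<noteq> 0" using q_n n2 by (cases "q = 0") (auto simp: power_0_left)
lemma q_mod: "q^k = q^(k mod n)" using prim_pow_mod[OF prim] .

definition yv where "yv = act 0 1 1"
definition wv where "wv = scale (-q) yv"
definition rr where "rr b = (n - b mod n) mod n"
definition cc where "cc r m = (-1)^r * q^(r*(r+1) div 2) * qbinom q m r"
definition Phi where "Phi b m a = (if m < n then scale (cc (rr b) m) (yv^(m - rr b) * a * yv^(rr b)) else 0)"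
definition Eh where "Eh b m a = (if m < n then act (b mod n) m a else 0)"
definition RR where "RR E \<longleftrightarrow> (\<forall>b m a. scale (q^(b+1)) (E b (Suc m) a) = E (Suc b) m a * wv - wv * E b m a)"
definition Base where "Base E \<longleftrightarrow> (\<forall>b a. E b 0 a = (if b mod n = 0 then a else 0))"

lemma cc0[simp]: "cc 0 m = 1" by (simp add: cc_def)
lemma cc_gt: "m < r \<Longrightarrow> cc r m = 0" by (simp add: cc_def qb_gt)
lemma cc_rec: "cc (Suc s) (Suc m) = q^(Suc s) * (cc (Suc s) m - cc s m)"
  unfolding cc_def qb_pascal tri_suc power_add by (simp add: algebra_simps)
lemma cc_last': "cc (n-1) (n-1) = 1"
  using cc_last[OF prim n2] by (simp add: cc_def)

lemma rr_lt: "rr b < n" using n2 by (simp add: rr_def)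
lemma rr_mod: "(b + rr b) mod n = 0"
  unfolding rr_def using n2
  by (metis mod_add_left_eq mod_add_right_eq mod_less_divisor add_diff_inverse_nat mod_self le_zero_eq not_less not_numeral_le_zero less_imp_le_nat zero_less_iff_neq_zero)
lemma q_rr: "q^(b+1) * q^(rr b) = q"
proof -
  have "q^(b+1) * q^(rr b) = q * q^(b + rr b)" by (simp add: power_add)
  also have "q^(b + rr b) = 1" using q_mod[of "b + rr b"] rr_mod by simp
  finally show ?thesis by simp
qed
lemma rr0: "b mod n = 0 \<Longrightarrow> rr b = 0" by (simp add: rr_def)
lemma rr0_suc: "b mod n = 0 \<Longrightarrow> rr (Suc b) = n - 1"
proof -
  assume "b mod n = 0"
  then have "Suc b mod n = 1" using n2 by (metis mod_Suc One_nat_def Suc_1 Suc_le_lessD less_not_refl2 Suc_lessD)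
  then show ?thesis using n2 by (simp add: rr_def)
qed
lemma rr_suc: "b mod n \<noteq> 0 \<Longrightarrow> rr b = Suc (rr (Suc b))"
proof -
  assume h: "b mod n \<noteq> 0"
  have lt: "b mod n < n" using n2 by simp
  show ?thesis
  proof (cases "Suc (b mod n) = n")
    case True
    then have "Suc b mod n = 0" by (metis mod_Suc mod_self)
    then show ?thesis using True h by (simp add: rr_def)
  next
    case False
    then have "Suc b mod n = Suc (b mod n)" by (simp add: mod_Suc)
    then show ?thesis using False h lt by (simp add: rr_def)
  qed
qed

lemma Phi_R:
  assumes "Suc m < n \<or> (Suc m = n \<and> yv^n * a = a * yv^n)"
  shows "scale (q^(b+1)) (Phi b (Suc m) a) = Phi (Suc b) m a * wv - wv * Phi b m a"
proof (cases "b mod n = 0")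
  case True
  have r: "rr b = 0" "rr (Suc b) = n - 1" using rr0 rr0_suc True by auto
  have qb: "q^b = 1" using q_mod[of b] True by simp
  have mn: "m < n" using assms by auto
  have P0: "Phi b m a = yv^m * a" using mn r by (simp add: Phi_def)
  show ?thesis
  proof (cases "Suc m < n")
    case True
    then have Z: "Phi (Suc b) m a = 0" using r by (simp add: Phi_def cc_gt)
    have "Phi b (Suc m) a = yv^(Suc m) * a" using True r by (simp add: Phi_def)
    then show ?thesis by (simp add: Z P0 qb wv_def mult.assoc)
  next
    case False
    then have m: "Suc m = n" and cen: "yv^n * a = a * yv^n" using assms by auto
    then have m': "m = n - 1" by simp
    have "Phi (Suc b) m a = a * yv^(n-1)" using r m' mn cc_last' by (simp add: Phi_def)
    then have "Phi (Suc b) m a * wv = scale (-q) (a * yv^n)"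
      using m by (simp add: wv_def mult.assoc flip: power_Suc2)
    moreover have "wv * Phi b m a = scale (-q) (yv^n * a)"
      using P0 m by (simp add: wv_def flip: power_Suc mult.assoc)
    ultimately show ?thesis using cen m by (simp add: Phi_def)
  qed
next
  case False
  define s where "s = rr (Suc b)"
  have r: "rr b = Suc s" using rr_suc False s_def by simp
  have mn: "m < n" using assms by auto
  define M where "M = yv^(m - s) * a * yv^(Suc s)"
  have A: "Phi (Suc b) m a * wv = scale (- (q * cc s m)) M"
    using mn by (simp add: Phi_def wv_def M_def mult.assoc s_def[symmetric] flip: power_Suc2)
  have B: "wv * Phi b m a = scale (- (q * cc (Suc s) m)) M"
  proof (cases "Suc s \<le> m")
    case True
    then have "yv * yv^(m - Suc s) = yv^(m-s)"
      by (metis Suc_diff_le diff_Suc_Suc power_Suc)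
    then have "yv * (yv^(m - Suc s) * (a * yv^(Suc s))) = M"
      by (simp add: M_def mult.assoc flip: mult.assoc[of yv])
    then show ?thesis using mn r by (simp add: Phi_def wv_def mult.assoc)
  next
    case False
    then show ?thesis using mn r by (simp add: Phi_def cc_gt)
  qed
  have key: "q^(b+1) * cc (Suc s) (Suc m) = q * (cc (Suc s) m - cc s m)"
  proof -
    have "q^(b+1) * cc (Suc s) (Suc m) = (q^(b+1) * q^(Suc s)) * (cc (Suc s) m - cc s m)"
      by (simp add: cc_rec)
    also have "q^(b+1) * q^(Suc s) = q" using q_rr[of b] r by simp
    finally show ?thesis .
  qed
  have RHS: "Phi (Suc b) m a * wv - wv * Phi b m a = scale (q * (cc (Suc s) m - cc s m)) M"
    unfolding A B by (simp add: algebra_simps V.scale_left_diff_distrib)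
  show ?thesis
  proof (cases "Suc m < n")
    case True
    then show ?thesis using RHS key r by (simp add: Phi_def M_def)
  next
    case False
    then have m: "Suc m = n" using assms by auto
    have "cc (Suc s) n = 0" using qb_n_zero[OF prim, of "Suc s"] rr_lt[of b] r by (simp add: cc_def)
    then have "q^(Suc s) * (cc (Suc s) m - cc s m) = 0" using cc_rec[of s m] m by simp
    then have "cc (Suc s) m - cc s m = 0" using q_nz by simp
    then show ?thesis using RHS m by (simp add: Phi_def)
  qed
qed

end

context S begin

lemma Phi_R_central:
  assumes "scale (q^(0+1)) (Phi 0 (Suc (n-1)) a) = Phi (Suc 0) (n-1) a * wv - wv * Phi 0 (n-1) a"
  shows "yv^n * a = a * yv^n"
proof -
  have r: "rr 0 = 0" "rr (Suc 0) = n - 1" using rr0 rr0_suc[of 0] by auto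
  have n1: "Suc (n-1) = n" "n - 1 < n" using n2 by auto
  have "Phi (Suc 0) (n-1) a = a * yv^(n-1)" using r n1 cc_last' by (simp add: Phi_def)
  then have A: "Phi (Suc 0) (n-1) a * wv = scale (-q) (a * yv^n)"
    using n1 by (simp add: wv_def mult.assoc flip: power_Suc2)
  have "Phi 0 (n-1) a = yv^(n-1) * a" using r n1 by (simp add: Phi_def)
  then have B: "wv * Phi 0 (n-1) a = scale (-q) (yv^n * a)"
    using n1 by (simp add: wv_def flip: power_Suc mult.assoc)
  have Z: "Phi 0 (Suc (n-1)) a = 0" using n1 by (simp add: Phi_def)
  have "0 = scale (-q) (a * yv^n) - scale (-q) (yv^n * a)"
    using assms by (simp only: Z A B V.scale_zero_right)
  then have "scale (-q) (a * yv^n - yv^n * a) = 0" by (simp only: V.scale_right_diff_distrib)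
  then have "a * yv^n - yv^n * a = 0" using q_nz by simp
  then show ?thesis by simp
qed

lemma Phi_base: "Base Phi"
  unfolding Base_def
proof (intro allI)
  fix b a
  show "Phi b 0 a = (if b mod n = 0 then a else 0)"
  proof (cases "b mod n = 0")
    case True then show ?thesis using n2 rr0 by (simp add: Phi_def)
  next
    case False then have "rr b = Suc (rr (Suc b))" by (rule rr_suc)
    then show ?thesis using n2 False by (simp add: Phi_def cc_gt)
  qed
qed

lemma uniq:
  assumes B: "Base E"
    and R: "\<And>b m a. Suc m < n \<Longrightarrow> scale (q^(b+1)) (E b (Suc m) a) = E (Suc b) m a * wv - wv * E b m a"
  shows "m < n \<Longrightarrow> E b m a = Phi b m a"
proof (induction m arbitrary: b a)
  case 0
  then show ?case using B Phi_base by (simp add: Base_def)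
next
  case (Suc m)
  have "scale (q^(b+1)) (E b (Suc m) a) = scale (q^(b+1)) (Phi b (Suc m) a)"
    using R[OF Suc.prems] Phi_R[of m a b] Suc.prems Suc.IH by simp
  then show ?case using q_nz by simp
qed

lemma pascal_sum:
  "(\<Sum>l\<le>Suc j. scale (qbinom q (Suc j) l) (F l)) =
     (\<Sum>l\<le>j. scale (qbinom q j l) (F (Suc l))) + (\<Sum>l\<le>j. scale (q^l * qbinom q j l) (F l))"
proof -
  have "(\<Sum>l\<le>Suc j. scale (qbinom q (Suc j) l) (F l)) =
      (\<Sum>l\<le>j. scale (qbinom q j l) (F (Suc l))) + (F 0 + (\<Sum>l\<le>j. scale (q^(Suc l) * qbinom q j (Suc l)) (F (Suc l))))"
    by (subst sum.atMost_Suc_shift) (simp add: qb_pascal V.scale_left_distrib sum.distrib algebra_simps)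
  also have "F 0 + (\<Sum>l\<le>j. scale (q^(Suc l) * qbinom q j (Suc l)) (F (Suc l))) = (\<Sum>l\<le>Suc j. scale (q^l * qbinom q j l) (F l))"
    by (simp only: sum.atMost_Suc_shift) simp
  also have "\<dots> = (\<Sum>l\<le>j. scale (q^l * qbinom q j l) (F l))"
    by (simp add: qb_gt)
  finally show ?thesis by (simp add: algebra_simps)
qed

lemma step_sum:
  assumes h: "\<And>l. l \<le> j \<Longrightarrow> scale (q^(i+1)) (F (Suc l)) + scale (q^(i+1) * q^l) (F l) = G1 l * wv - wv * G2 l"
  shows "scale (q^(i+1)) (\<Sum>l\<le>Suc j. scale (qbinom q (Suc j) l) (F l)) =
     (\<Sum>l\<le>j. scale (qbinom q j l) (G1 l)) * wv - wv * (\<Sum>l\<le>j. scale (qbinom q j l) (G2 l))"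
proof -
  have "scale (q^(i+1)) (\<Sum>l\<le>Suc j. scale (qbinom q (Suc j) l) (F l)) =
     (\<Sum>l\<le>j. scale (qbinom q j l) (scale (q^(i+1)) (F (Suc l)) + scale (q^(i+1) * q^l) (F l)))"
    by (simp only: pascal_sum) (simp add: V.scale_right_distrib V.scale_sum_right sum.distrib algebra_simps)
  also have "\<dots> = (\<Sum>l\<le>j. scale (qbinom q j l) (G1 l) * wv - wv * scale (qbinom q j l) (G2 l))"
  proof (intro sum.cong refl)
    fix l assume "l \<in> {..j}"
    then have "l \<le> j" by simp
    show "scale (qbinom q j l) (scale (q^(i+1)) (F (Suc l)) + scale (q^(i+1) * q^l) (F l)) =
      scale (qbinom q j l) (G1 l) * wv - wv * scale (qbinom q j l) (G2 l)"
      using h[OF \<open>l \<le> j\<close>] by (simp add: V.scale_right_diff_distrib)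
  qed
  also have "\<dots> = (\<Sum>l\<le>j. scale (qbinom q j l) (G1 l)) * wv - wv * (\<Sum>l\<le>j. scale (qbinom q j l) (G2 l))"
    by (simp add: sum_subtractf sum_distrib_left sum_distrib_right)
  finally show ?thesis .
qed

lemma Eh_scale[simp]: "Eh b m (scale c x) = scale c (Eh b m x)" by (simp add: Eh_def)
lemma Eh_big[simp]: "n \<le> m \<Longrightarrow> Eh b m x = 0" by (simp add: Eh_def)

lemma C2_Eh:
  assumes B: "Base Eh" and R: "RR Eh"
  shows "j < n \<Longrightarrow> Eh i j (a * b) = (\<Sum>l\<le>j. scale (qbinom q j l) (Eh (i+l) (j-l) a * Eh i l b))"
proof (induction j arbitrary: i)
  case 0
  then show ?case using B by (simp add: Base_def)
next
  case (Suc j)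
  have R': "\<And>b m a. scale (q^(b+1)) (Eh b (Suc m) a) = Eh (Suc b) m a * wv - wv * Eh b m a"
    using R by (simp add: RR_def)
  define F where "F l = Eh (i+l) (Suc j - l) a * Eh i l b" for l
  have "scale (q^(i+1)) (\<Sum>l\<le>Suc j. scale (qbinom q (Suc j) l) (F l)) =
     (\<Sum>l\<le>j. scale (qbinom q j l) (Eh (Suc i + l) (j-l) a * Eh (Suc i) l b)) * wv
      - wv * (\<Sum>l\<le>j. scale (qbinom q j l) (Eh (i+l) (j-l) a * Eh i l b))"
  proof (rule step_sum)
    fix l assume l: "l \<le> j"
    have e1: "scale (q^(i+1)) (F (Suc l)) = Eh (Suc i + l) (j-l) a * (Eh (Suc i) l b * wv - wv * Eh i l b)"
    proof -
      have "scale (q^(i+1)) (F (Suc l)) = Eh (Suc i + l) (j-l) a * scale (q^(i+1)) (Eh i (Suc l) b)"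
        by (simp add: F_def)
      then show ?thesis by (simp only: R' add_Suc)
    qed
    have e2: "scale (q^(i+1) * q^l) (F l) = (Eh (Suc (i+l)) (j-l) a * wv - wv * Eh (i+l) (j-l) a) * Eh i l b"
    proof -
      have "Suc j - l = Suc (j - l)" using l by simp
      then have "scale (q^(i+1) * q^l) (F l) = scale (q^(i+l+1)) (Eh (i+l) (Suc (j-l)) a) * Eh i l b"
        by (simp add: F_def power_add algebra_simps)
      then show ?thesis by (simp only: R' add_Suc)
    qed
    show "scale (q^(i+1)) (F (Suc l)) + scale (q^(i+1) * q^l) (F l) =
        Eh (Suc i + l) (j-l) a * Eh (Suc i) l b * wv - wv * (Eh (i+l) (j-l) a * Eh i l b)"
      unfolding e1 e2 by (simp add: algebra_simps)
  qed
  also have "\<dots> = Eh (Suc i) j (a*b) * wv - wv * Eh i j (a * b)"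
    using Suc by simp
  also have "\<dots> = scale (q^(i+1)) (Eh i (Suc j) (a*b))"
    using R' by simp
  finally show ?case using q_nz by (simp add: F_def)
qed

lemma Eh_mod: "b mod n = b' mod n \<Longrightarrow> Eh b m x = Eh b' m x" by (simp add: Eh_def)

lemma C3_Eh:
  assumes B: "Base Eh" and R: "RR Eh"
  shows "j < n \<Longrightarrow> Eh i j (Eh k m a) =
    (\<Sum>l\<le>j. scale (qbinom q j l) (Eh (i+l) (j-l) 1 * scale (q^(l*k)) (Eh (i+k) (l+m) a)))"
proof (induction j arbitrary: i)
  case 0
  show ?case
  proof (cases "i mod n = 0")
    case True
    then have "Eh (i+k) m a = Eh k m a" by (intro Eh_mod) (simp add: mod_add_left_eq[symmetric])
    then show ?thesis using B True by (simp add: Base_def)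
  next
    case False then show ?thesis using B by (simp add: Base_def)
  qed
next
  case (Suc j)
  have R': "\<And>b m a. scale (q^(b+1)) (Eh b (Suc m) a) = Eh (Suc b) m a * wv - wv * Eh b m a"
    using R by (simp add: RR_def)
  define F where "F l = Eh (i+l) (Suc j - l) 1 * scale (q^(l*k)) (Eh (i+k) (l+m) a)" for l
  have "scale (q^(i+1)) (\<Sum>l\<le>Suc j. scale (qbinom q (Suc j) l) (F l)) =
     (\<Sum>l\<le>j. scale (qbinom q j l) (Eh (Suc i + l) (j-l) 1 * scale (q^(l*k)) (Eh (Suc i + k) (l+m) a))) * wv
      - wv * (\<Sum>l\<le>j. scale (qbinom q j l) (Eh (i+l) (j-l) 1 * scale (q^(l*k)) (Eh (i+k) (l+m) a)))"
  proof (rule step_sum)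
    fix l assume l: "l \<le> j"
    have e1: "scale (q^(i+1)) (F (Suc l)) = Eh (Suc i + l) (j-l) 1 * scale (q^(l*k)) (Eh (Suc i + k) (l+m) a * wv - wv * Eh (i+k) (l+m) a)"
    proof -
      have "scale (q^(i+1)) (F (Suc l)) = Eh (Suc i + l) (j-l) 1 * scale (q^(l*k)) (scale (q^(i+k+1)) (Eh (i+k) (Suc (l+m)) a))"
        by (simp add: F_def power_add algebra_simps)
      then show ?thesis by (simp only: R' add_Suc)
    qed
    have e2: "scale (q^(i+1) * q^l) (F l) = (Eh (Suc (i+l)) (j-l) 1 * wv - wv * Eh (i+l) (j-l) 1) * scale (q^(l*k)) (Eh (i+k) (l+m) a)"
    proof -
      have "Suc j - l = Suc (j - l)" using l by simp
      then have "scale (q^(i+1) * q^l) (F l) = scale (q^(i+l+1)) (Eh (i+l) (Suc (j-l)) 1) * scale (q^(l*k)) (Eh (i+k) (l+m) a)"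
        by (simp add: F_def power_add algebra_simps)
      then show ?thesis by (simp only: R' add_Suc)
    qed
    show "scale (q^(i+1)) (F (Suc l)) + scale (q^(i+1) * q^l) (F l) =
        Eh (Suc i + l) (j-l) 1 * scale (q^(l*k)) (Eh (Suc i + k) (l+m) a) * wv - wv * (Eh (i+l) (j-l) 1 * scale (q^(l*k)) (Eh (i+k) (l+m) a))"
      unfolding e1 e2 by (simp add: algebra_simps V.scale_right_diff_distrib)
  qed
  also have "\<dots> = Eh (Suc i) j (Eh k m a) * wv - wv * Eh i j (Eh k m a)"
    using Suc by simp
  also have "\<dots> = scale (q^(i+1)) (Eh i (Suc j) (Eh k m a))"
    using R' by simp
  finally show ?case using q_nz by (simp add: F_def)
qed

end

context S begin

lemma scale_if01: "scale (if P then 1 else 0) x = (if P then x else 0)" by simp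
lemma sc_if: "scale (c * (if P then 1 else 0)) x = scale c (if P then x else 0)" by simp
lemma sum_if_out: "(\<Sum>y\<in>B. if P then f y else 0) = (if P then (\<Sum>y\<in>B. f y) else 0)" by (cases P) auto

lemma basis_eq: "i < n \<Longrightarrow> j < n \<Longrightarrow> taft_basis n i j = (\<lambda>p. if p = (i,j) then 1 else 0)"
  by (auto simp: taft_basis_def)

lemma actlin_basis: "i < n \<Longrightarrow> j < n \<Longrightarrow> act_lin scale act n (taft_basis n i j) a = act i j a"
  by (simp add: act_lin_def basis_eq scale_if01 sum.delta idx_def)

lemma elem_basis: "i < n \<Longrightarrow> taft_elem n (taft_basis n i j)"
  by (auto simp: taft_elem_def taft_basis_def idx_def)

lemma comult_basis: "i < n \<Longrightarrow> j < n \<Longrightarrow> taft_comult n q (taft_basis n i j) p = taft_comult_basis n q i j p"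
  by (simp add: taft_comult_def basis_eq if01_mult sum.delta idx_def)

lemma sum_comult:
  assumes "i < n" "j < n"
  shows "(\<Sum>u\<in>idx n. \<Sum>v\<in>idx n. scale (taft_comult_basis n q i j (u,v)) (X u v)) =
     (\<Sum>l\<le>j. scale (qbinom q j l) (X ((i+l) mod n, j-l) (i,l)))"
proof -
  have "(\<Sum>u\<in>idx n. \<Sum>v\<in>idx n. scale (taft_comult_basis n q i j (u,v)) (X u v)) =
     (\<Sum>u\<in>idx n. \<Sum>v\<in>idx n. \<Sum>l\<le>j. scale (qbinom q j l) (if u = ((i+l) mod n, j-l) \<and> v = (i,l) then X u v else 0))"
    using n2 assms by (simp add: CB V.scale_sum_left tt_basis_def sc_if)
  also have "\<dots> = (\<Sum>l\<le>j. \<Sum>u\<in>idx n. \<Sum>v\<in>idx n. scale (qbinom q j l) (if u = ((i+l) mod n, j-l) \<and> v = (i,l) then X u v else 0))"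
    by (simp only: sum.swap[of _ "idx n" "{..j}"])
  also have "\<dots> = (\<Sum>l\<le>j. scale (qbinom q j l) (X ((i+l) mod n, j-l) (i,l)))"
  proof (intro sum.cong refl)
    fix l assume "l \<in> {..j}"
    then have l: "l \<le> j" by simp
    have mem: "((i+l) mod n, j-l) \<in> idx n" "(i,l) \<in> idx n" using assms l n2 by (auto simp: idx_def)
    have "(\<Sum>u\<in>idx n. \<Sum>v\<in>idx n. scale (qbinom q j l) (if u = ((i+l) mod n, j-l) \<and> v = (i,l) then X u v else 0))
       = (\<Sum>u\<in>idx n. \<Sum>v\<in>idx n. if u = ((i+l) mod n, j-l) then (if v = (i,l) then scale (qbinom q j l) (X u v) else 0) else 0)"
      by (intro sum.cong refl) simp
    also have "\<dots> = scale (qbinom q j l) (X ((i+l) mod n, j-l) (i,l))"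
      using mem by (simp add: sum.delta sum_if_out)
    finally show "(\<Sum>u\<in>idx n. \<Sum>v\<in>idx n. scale (qbinom q j l) (if u = ((i+l) mod n, j-l) \<and> v = (i,l) then X u v else 0))
       = scale (qbinom q j l) (X ((i+l) mod n, j-l) (i,l))" .
  qed
  finally show ?thesis .
qed

definition MB where "MB v z a = (if snd v + snd z < n then scale (q^(snd v * fst z)) (act ((fst v + fst z) mod n) (snd v + snd z) a) else 0)"

lemma mul_basis_fun:
  assumes "v \<in> idx n" "z \<in> idx n"
  shows "taft_mul n q (taft_basis n (fst v) (snd v)) (taft_basis n (fst z) (snd z)) p = taft_sc n q v z p"
proof -
  have b: "taft_basis n (fst v) (snd v) = (\<lambda>p. if p = v then 1 else 0)" "taft_basis n (fst z) (snd z) = (\<lambda>p. if p = z then 1 else 0)"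
    using assms by (auto simp: basis_eq idx_def)
  show ?thesis using assms unfolding taft_mul_def b by (simp add: if01_mult if0_mult sum.delta sum_if_out)
qed

lemma mul_basis:
  assumes "v \<in> idx n" "z \<in> idx n"
  shows "act_lin scale act n (taft_mul n q (taft_basis n (fst v) (snd v)) (taft_basis n (fst z) (snd z))) a = MB v z a"
proof -
  have "act_lin scale act n (taft_mul n q (taft_basis n (fst v) (snd v)) (taft_basis n (fst z) (snd z))) a
     = (\<Sum>p\<in>idx n. if p = ((fst v + fst z) mod n, snd v + snd z) \<and> snd v + snd z < n then scale (q^(snd v * fst z)) (act (fst p) (snd p) a) else 0)"
    unfolding act_lin_def mul_basis_fun[OF assms]
    by (intro sum.cong refl) (auto simp: taft_sc_def)
  also have "\<dots> = MB v z a"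
    using n2 by (cases "snd v + snd z < n") (simp_all add: MB_def sum.delta idx_def)
  finally show ?thesis .
qed

lemma mul_lin:
  assumes "v \<in> idx n" "taft_elem n k"
  shows "act_lin scale act n (taft_mul n q (taft_basis n (fst v) (snd v)) k) a = (\<Sum>z\<in>idx n. scale (k z) (MB v z a))"
proof -
  have b: "taft_basis n (fst v) (snd v) = (\<lambda>p. if p = v then 1 else 0)"
    using assms by (auto simp: basis_eq idx_def)
  have tm: "taft_mul n q (taft_basis n (fst v) (snd v)) k p = (\<Sum>z\<in>idx n. k z * taft_sc n q v z p)" for p
    using assms unfolding taft_mul_def b by (simp add: if01_mult if0_mult sum.delta sum_if_out)
  have "act_lin scale act n (taft_mul n q (taft_basis n (fst v) (snd v)) k) a
      = (\<Sum>p\<in>idx n. \<Sum>z\<in>idx n. scale (k z) (scale (taft_sc n q v z p) (act (fst p) (snd p) a)))"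
    unfolding act_lin_def tm by (simp add: V.scale_sum_left)
  also have "\<dots> = (\<Sum>z\<in>idx n. scale (k z) (\<Sum>p\<in>idx n. scale (taft_sc n q v z p) (act (fst p) (snd p) a)))"
    by (subst sum.swap) (simp add: V.scale_sum_right)
  also have "\<dots> = (\<Sum>z\<in>idx n. scale (k z) (MB v z a))"
  proof (intro sum.cong refl)
    fix z assume z: "z \<in> idx n"
    have "(\<Sum>p\<in>idx n. scale (taft_sc n q v z p) (act (fst p) (snd p) a)) = act_lin scale act n (taft_mul n q (taft_basis n (fst v) (snd v)) (taft_basis n (fst z) (snd z))) a"
      unfolding act_lin_def mul_basis_fun[OF assms(1) z] ..
    then show "scale (k z) (\<Sum>p\<in>idx n. scale (taft_sc n q v z p) (act (fst p) (snd p) a)) = scale (k z) (MB v z a)"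
      using mul_basis[OF assms(1) z] by simp
  qed
  finally show ?thesis .
qed

end

lemma swap3: "(\<Sum>x\<in>A. \<Sum>y\<in>B. \<Sum>z\<in>C. f x y z) = (\<Sum>y\<in>B. \<Sum>z\<in>C. \<Sum>x\<in>A. f x y z)"
  by (subst sum.swap) (rule sum.cong[OF refl], rule sum.swap)

context S begin

definition "C1 \<longleftrightarrow> (\<forall>a. act 0 0 a = a)"
definition "C2 \<longleftrightarrow> (\<forall>i j a b. i < n \<longrightarrow> j < n \<longrightarrow>
   act i j (a * b) = (\<Sum>l\<le>j. scale (qbinom q j l) (act ((i+l) mod n) (j-l) a * act i l b)))"
definition "C3 \<longleftrightarrow> (\<forall>i j k m a. i < n \<longrightarrow> j < n \<longrightarrow> k < n \<longrightarrow> m < n \<longrightarrow>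
   act i j (act k m a) = (\<Sum>l\<le>j. scale (qbinom q j l) (act ((i+l) mod n) (j-l) 1 * MB (i,l) (k,m) a)))"

lemma idx_mem: "w \<in> idx n \<longleftrightarrow> fst w < n \<and> snd w < n" by (cases w) (auto simp: idx_def)

lemma swap_scale:
  "(\<Sum>w\<in>A. scale (h w) (\<Sum>u\<in>B. \<Sum>v\<in>C. scale (t w u v) (Y u v))) = (\<Sum>u\<in>B. \<Sum>v\<in>C. scale (\<Sum>w\<in>A. h w * t w u v) (Y u v))"
proof -
  have "(\<Sum>w\<in>A. scale (h w) (\<Sum>u\<in>B. \<Sum>v\<in>C. scale (t w u v) (Y u v))) = (\<Sum>w\<in>A. \<Sum>u\<in>B. \<Sum>v\<in>C. scale (h w * t w u v) (Y u v))"
    by (simp add: V.scale_sum_right)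
  also have "\<dots> = (\<Sum>u\<in>B. \<Sum>v\<in>C. \<Sum>w\<in>A. scale (h w * t w u v) (Y u v))" by (rule swap3)
  also have "\<dots> = (\<Sum>u\<in>B. \<Sum>v\<in>C. scale (\<Sum>w\<in>A. h w * t w u v) (Y u v))" by (simp add: V.scale_sum_left)
  finally show ?thesis .
qed

lemma inner: "(\<Sum>z\<in>Z. scale (k z) (\<Sum>u\<in>U. \<Sum>v\<in>W. scale (t u v) (A u * M v z))) =
   (\<Sum>u\<in>U. \<Sum>v\<in>W. scale (t u v) (A u * (\<Sum>z\<in>Z. scale (k z) (M v z))))"
proof -
  have "(\<Sum>z\<in>Z. scale (k z) (\<Sum>u\<in>U. \<Sum>v\<in>W. scale (t u v) (A u * M v z))) =
      (\<Sum>z\<in>Z. \<Sum>u\<in>U. \<Sum>v\<in>W. scale (t u v) (scale (k z) (A u * M v z)))"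
    by (simp add: V.scale_sum_right mult.commute)
  also have "\<dots> = (\<Sum>u\<in>U. \<Sum>v\<in>W. \<Sum>z\<in>Z. scale (t u v) (scale (k z) (A u * M v z)))" by (rule swap3)
  also have "\<dots> = (\<Sum>u\<in>U. \<Sum>v\<in>W. scale (t u v) (A u * (\<Sum>z\<in>Z. scale (k z) (M v z))))"
    by (simp add: V.scale_sum_right sum_distrib_left)
  finally show ?thesis .
qed

lemma PA_imp: "partial_action n q scale act \<Longrightarrow> C1 \<and> C2 \<and> C3"
proof -
  assume PA: "partial_action n q scale act"
  have n0: "0 < n" using n2 by simp
  have PA2: "\<And>h a b. taft_elem n h \<Longrightarrow> act_lin scale act n h (a * b) =
          (\<Sum>u\<in>idx n. \<Sum>v\<in>idx n. scale (taft_comult n q h (u, v))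
              (act (fst u) (snd u) a * act (fst v) (snd v) b))"
    using PA unfolding partial_action_def by blast
  have PA3: "\<And>h k a. taft_elem n h \<Longrightarrow> taft_elem n k \<Longrightarrow>
        act_lin scale act n h (act_lin scale act n k a) =
          (\<Sum>u\<in>idx n. \<Sum>v\<in>idx n. scale (taft_comult n q h (u, v))
              (act (fst u) (snd u) 1 *
               act_lin scale act n (taft_mul n q (taft_basis n (fst v) (snd v)) k) a))"
    using PA unfolding partial_action_def by blast
  have c1: C1 unfolding C1_def
  proof
    fix a show "act 0 0 a = a" using PA n0 actlin_basis[of 0 0 a] by (simp add: partial_action_def)
  qed
  have c2: C2 unfolding C2_def
  proof (intro allI impI)
    fix i j a b assume ij: "i < n" "j < n"
    have "act i j (a * b) = (\<Sum>u\<in>idx n. \<Sum>v\<in>idx n. scale (taft_comult_basis n q i j (u,v)) (act (fst u) (snd u) a * act (fst v) (snd v) b))"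
      using PA2[OF elem_basis[OF ij(1), of j]] ij
      by (simp add: actlin_basis comult_basis)
    also have "\<dots> = (\<Sum>l\<le>j. scale (qbinom q j l) (act ((i+l) mod n) (j-l) a * act i l b))"
      by (subst sum_comult[OF ij]) simp
    finally show "act i j (a * b) = (\<Sum>l\<le>j. scale (qbinom q j l) (act ((i+l) mod n) (j-l) a * act i l b))" .
  qed
  have c3: C3 unfolding C3_def
  proof (intro allI impI)
    fix i j k m a assume ij: "i < n" "j < n" and km: "k < n" "m < n"
    have "act i j (act k m a) = (\<Sum>u\<in>idx n. \<Sum>v\<in>idx n. scale (taft_comult_basis n q i j (u,v))
        (act (fst u) (snd u) 1 * act_lin scale act n (taft_mul n q (taft_basis n (fst v) (snd v)) (taft_basis n k m)) a))"
      using PA3[OF elem_basis[OF ij(1), of j] elem_basis[OF km(1), of m]] ij km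
      by (simp add: actlin_basis comult_basis)
    also have "\<dots> = (\<Sum>l\<le>j. scale (qbinom q j l) (act ((i+l) mod n) (j-l) 1 *
        act_lin scale act n (taft_mul n q (taft_basis n i l) (taft_basis n k m)) a))"
      by (subst sum_comult[OF ij]) simp
    also have "\<dots> = (\<Sum>l\<le>j. scale (qbinom q j l) (act ((i+l) mod n) (j-l) 1 * MB (i,l) (k,m) a))"
    proof (intro sum.cong refl)
      fix l assume "l \<in> {..j}"
      then have "(i,l) \<in> idx n" "(k,m) \<in> idx n" using ij km by (auto simp: idx_def)
      from mul_basis[OF this, of a] show "scale (qbinom q j l) (act ((i+l) mod n) (j-l) 1 *
        act_lin scale act n (taft_mul n q (taft_basis n i l) (taft_basis n k m)) a) =
        scale (qbinom q j l) (act ((i+l) mod n) (j-l) 1 * MB (i,l) (k,m) a)" by simp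
    qed
    finally show "act i j (act k m a) = (\<Sum>l\<le>j. scale (qbinom q j l) (act ((i+l) mod n) (j-l) 1 * MB (i,l) (k,m) a))" .
  qed
  show ?thesis using c1 c2 c3 by blast
qed

lemma PA_if: "C1 \<Longrightarrow> C2 \<Longrightarrow> C3 \<Longrightarrow> partial_action n q scale act"
proof -
  assume c1: C1 and c2: C2 and c3: C3
  have n0: "0 < n" using n2 by simp
  have r2: "act (fst w) (snd w) (a * b) = (\<Sum>u\<in>idx n. \<Sum>v\<in>idx n. scale (taft_comult_basis n q (fst w) (snd w) (u,v)) (act (fst u) (snd u) a * act (fst v) (snd v) b))"
    if "w \<in> idx n" for w a b
  proof -
    have ij: "fst w < n" "snd w < n" using that by (auto simp: idx_def)
    show ?thesis using c2 ij by (subst sum_comult[OF ij]) (simp add: C2_def)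
  qed
  have r3: "act (fst w) (snd w) (act (fst z) (snd z) a) = (\<Sum>u\<in>idx n. \<Sum>v\<in>idx n. scale (taft_comult_basis n q (fst w) (snd w) (u,v)) (act (fst u) (snd u) 1 * MB v z a))"
    if "w \<in> idx n" "z \<in> idx n" for w z a
  proof -
    have ij: "fst w < n" "snd w < n" "fst z < n" "snd z < n" using that by (auto simp: idx_def)
    show ?thesis using c3 ij by (subst sum_comult[OF ij(1,2)]) (simp add: C3_def)
  qed
  have p1: "\<forall>a. act_lin scale act n (taft_basis n 0 0) a = a"
    using c1 n0 by (simp add: actlin_basis C1_def)
  have p2: "\<forall>h a b. taft_elem n h \<longrightarrow>
        act_lin scale act n h (a * b) =
          (\<Sum>u\<in>idx n. \<Sum>v\<in>idx n. scale (taft_comult n q h (u, v))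
              (act (fst u) (snd u) a * act (fst v) (snd v) b))"
  proof (intro allI impI)
    fix h :: "'k taft" and a b assume "taft_elem n h"
    have "act_lin scale act n h (a * b) = (\<Sum>w\<in>idx n. scale (h w) (\<Sum>u\<in>idx n. \<Sum>v\<in>idx n. scale (taft_comult_basis n q (fst w) (snd w) (u,v)) (act (fst u) (snd u) a * act (fst v) (snd v) b)))"
      unfolding act_lin_def by (intro sum.cong refl) (simp add: r2)
    also have "\<dots> = (\<Sum>u\<in>idx n. \<Sum>v\<in>idx n. scale (taft_comult n q h (u, v)) (act (fst u) (snd u) a * act (fst v) (snd v) b))"
      unfolding swap_scale taft_comult_def ..
    finally show "act_lin scale act n h (a * b) = (\<Sum>u\<in>idx n. \<Sum>v\<in>idx n. scale (taft_comult n q h (u, v)) (act (fst u) (snd u) a * act (fst v) (snd v) b))" .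
  qed
  have p3: "\<forall>h k a. taft_elem n h \<longrightarrow> taft_elem n k \<longrightarrow>
        act_lin scale act n h (act_lin scale act n k a) =
          (\<Sum>u\<in>idx n. \<Sum>v\<in>idx n. scale (taft_comult n q h (u, v))
              (act (fst u) (snd u) 1 *
               act_lin scale act n (taft_mul n q (taft_basis n (fst v) (snd v)) k) a))"
  proof (intro allI impI)
    fix h k :: "'k taft" and a assume hk: "taft_elem n h" "taft_elem n k"
    have "act_lin scale act n h (act_lin scale act n k a) =
        (\<Sum>w\<in>idx n. scale (h w) (\<Sum>z\<in>idx n. scale (k z) (act (fst w) (snd w) (act (fst z) (snd z) a))))"
      unfolding act_lin_def by (simp add: act_sum)
    also have "\<dots> = (\<Sum>w\<in>idx n. scale (h w) (\<Sum>z\<in>idx n. scale (k z) (\<Sum>u\<in>idx n. \<Sum>v\<in>idx n. scale (taft_comult_basis n q (fst w) (snd w) (u,v)) (act (fst u) (snd u) 1 * MB v z a))))"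
      by (intro sum.cong refl) (simp add: r3)
    also have "\<dots> = (\<Sum>w\<in>idx n. scale (h w) (\<Sum>u\<in>idx n. \<Sum>v\<in>idx n. scale (taft_comult_basis n q (fst w) (snd w) (u,v)) (act (fst u) (snd u) 1 * (\<Sum>z\<in>idx n. scale (k z) (MB v z a)))))"
      by (intro sum.cong refl) (simp only: inner)
    also have "\<dots> = (\<Sum>u\<in>idx n. \<Sum>v\<in>idx n. scale (taft_comult n q h (u, v)) (act (fst u) (snd u) 1 * (\<Sum>z\<in>idx n. scale (k z) (MB v z a))))"
      unfolding swap_scale taft_comult_def ..
    also have "\<dots> = (\<Sum>u\<in>idx n. \<Sum>v\<in>idx n. scale (taft_comult n q h (u, v)) (act (fst u) (snd u) 1 * act_lin scale act n (taft_mul n q (taft_basis n (fst v) (snd v)) k) a))"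
      using hk by (intro sum.cong refl) (simp add: mul_lin)
    finally show "act_lin scale act n h (act_lin scale act n k a) =
          (\<Sum>u\<in>idx n. \<Sum>v\<in>idx n. scale (taft_comult n q h (u, v))
              (act (fst u) (snd u) 1 *
               act_lin scale act n (taft_mul n q (taft_basis n (fst v) (snd v)) k) a))" .
  qed
  show ?thesis unfolding partial_action_def using p1 p2 p3 by blast
qed

end

context S begin

lemma mod_lem1: "(n - 1 + Suc b mod n) mod n = b mod n"
proof -
  have "(n - 1 + Suc b mod n) mod n = (n - 1 + Suc b) mod n" by (simp add: mod_add_right_eq)
  also have "n - 1 + Suc b = b + 1 * n" using n2 by simp
  finally show ?thesis by (simp only: mod_mult_self1)
qed

lemma mod_lem1': "(n + Suc b mod n - Suc 0) mod n = b mod n"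
proof -
  have "n + Suc b mod n - Suc 0 = n - 1 + Suc b mod n" using n2 by simp
  then show ?thesis using mod_lem1[of b] by simp
qed

lemma q_suc_mod: "q^(Suc b mod n) = q * q^b"
  using q_mod[of "Suc b"] by simp

lemma rr_inv: "i < n \<Longrightarrow> rr ((n - i) mod n) = i"
  by (cases "i = 0") (auto simp: rr_def)

lemma rr_inv2: "(n - rr b) mod n = b mod n"
proof (cases "b mod n = 0")
  case True then show ?thesis by (simp add: rr_def)
next
  case False
  then have "rr b = n - b mod n" using n2 by (simp add: rr_def)
  then show ?thesis using n2 by simp
qed

lemma forward:
  assumes A1: "act 0 0 1 = 1" and A2: "\<And>i. 1 \<le> i \<Longrightarrow> i < n \<Longrightarrow> act i 0 1 = 0"
    and PA: "partial_action n q scale act"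
  shows "(\<forall>b m a. m < n \<longrightarrow> Eh b m a = Phi b m a) \<and> (\<forall>a. yv^n * a = a * yv^n)"
proof -
  have c: C1 C2 C3 using PA_imp[OF PA] by auto
  have n0: "0 < n" "1 < n" using n2 by auto
  have c1: "\<And>a. act 0 0 a = a" using c(1) by (simp add: C1_def)
  have c2: "\<And>i j a b. i < n \<Longrightarrow> j < n \<Longrightarrow> act i j (a * b) = (\<Sum>l\<le>j. scale (qbinom q j l) (act ((i+l) mod n) (j-l) a * act i l b))"
    using c(2) by (simp add: C2_def)
  have c3: "\<And>i j k m a. i < n \<Longrightarrow> j < n \<Longrightarrow> k < n \<Longrightarrow> m < n \<Longrightarrow>
     act i j (act k m a) = (\<Sum>l\<le>j. scale (qbinom q j l) (act ((i+l) mod n) (j-l) 1 * MB (i,l) (k,m) a))"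
    using c(3) by (simp add: C3_def)
  have base: "Base Eh" unfolding Base_def
  proof (intro allI)
    fix b a
    have i: "b mod n < n" using n0 by simp
    have e: "act (b mod n) 0 a = act (b mod n) 0 1 * act (b mod n) 0 a"
      using c3[OF i n0(1) n0(1) n0(1), of a] n0 i by (simp add: c1 MB_def)
    show "Eh b 0 a = (if b mod n = 0 then a else 0)"
    proof (cases "b mod n = 0")
      case True then show ?thesis using n0 c1 by (simp add: Eh_def)
    next
      case False then have "act (b mod n) 0 1 = 0" using A2 i by simp
      then show ?thesis using e False n0 by (simp add: Eh_def)
    qed
  qed
  have nm1: "n - 1 < n" using n0 by simp
  have R1: "\<And>X. act (n-1) 1 X = X * act (n-1) 1 1"
  proof -
    fix X
    have "act (n-1) 1 (X * 1) = (\<Sum>l\<le>1. scale (qbinom q 1 l) (act ((n-1+l) mod n) (1-l) X * act (n-1) l 1))"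
      using c2[OF nm1 n0(2)] .
    also have "\<dots> = X * act (n-1) 1 1"
      using A2[of "n-1"] n0 c1 by (simp add: qb_diag)
    finally show "act (n-1) 1 X = X * act (n-1) 1 1" by simp
  qed
  have W: "act (n-1) 1 1 = wv"
  proof -
    have "act (n-1) 1 (act 1 0 1) = (\<Sum>l\<le>1. scale (qbinom q 1 l) (act ((n-1+l) mod n) (1-l) 1 * MB (n-1,l) (1,0) 1))"
      using c3[OF nm1 n0(2) n0(2) n0(1)] .
    moreover have "act 1 0 1 = 0" using A2 n0 by simp
    ultimately have "0 = act (n-1) 1 1 + scale q yv"
      using n0 A1 by (simp add: MB_def qb_diag yv_def)
    then show ?thesis by (simp add: wv_def eq_neg_iff_add_eq_0[symmetric] add.commute)
  qed
  have RR: "RR Eh" unfolding RR_def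
  proof (intro allI)
    fix b m a
    show "scale (q^(b+1)) (Eh b (Suc m) a) = Eh (Suc b) m a * wv - wv * Eh b m a"
    proof (cases "m < n")
      case False then show ?thesis by simp
    next
      case True
      have bl: "Suc b mod n < n" using n0 by simp
      have "act (n-1) 1 (act (Suc b mod n) m a) = (\<Sum>l\<le>1. scale (qbinom q 1 l) (act ((n-1+l) mod n) (1-l) 1 * MB (n-1,l) (Suc b mod n,m) a))"
        using c3[OF nm1 n0(2) bl True] .
      also have "\<dots> = wv * act (b mod n) m a + (if Suc m < n then scale (q^(Suc b)) (act (b mod n) (Suc m) a) else 0)"
      proof -
        have s: "(\<Sum>l\<le>1. g l) = g 0 + g 1" for g :: "nat \<Rightarrow> 'a" by (simp add: atMost_Suc)
        have m1: "(n - 1 + Suc b mod n) mod n = b mod n" by (rule mod_lem1)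
        have t0: "act ((n-1+0) mod n) (1-0) 1 = wv" using W nm1 by simp
        have t1: "act ((n-1+1) mod n) (1-1) 1 = 1" using A1 n0 by simp
        have M0: "MB (n-1,0) (Suc b mod n, m) a = act (b mod n) m a" using True m1 by (simp add: MB_def)
        have M1: "MB (n-1,1) (Suc b mod n, m) a = (if Suc m < n then scale (q^(Suc b)) (act (b mod n) (Suc m) a) else 0)"
        proof -
          have "MB (n-1,1) (Suc b mod n, m) a = (if 1 + m < n then scale (q^(1 * (Suc b mod n))) (act ((n - 1 + Suc b mod n) mod n) (1 + m) a) else 0)"
            by (simp only: MB_def fst_conv snd_conv)
          also have "\<dots> = (if Suc m < n then scale (q^(Suc b)) (act (b mod n) (Suc m) a) else 0)"
            by (simp only: m1 mult_1 q_mod[of "Suc b", symmetric] plus_1_eq_Suc)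
          finally show ?thesis .
        qed
        show ?thesis unfolding s t0 t1 M0 M1 by (simp add: qb_diag)
      qed
      finally have "act (Suc b mod n) m a * wv = wv * act (b mod n) m a + (if Suc m < n then scale (q^(Suc b)) (act (b mod n) (Suc m) a) else 0)"
        using R1[of "act (Suc b mod n) m a"] W by simp
      then show ?thesis using True by (simp add: Eh_def algebra_simps)
    qed
  qed
  have EP: "\<forall>b m a. m < n \<longrightarrow> Eh b m a = Phi b m a"
  proof (intro allI impI)
    fix b m a assume "m < n"
    show "Eh b m a = Phi b m a"
      by (rule uniq[OF base _ \<open>m < n\<close>]) (use RR in \<open>simp add: RR_def\<close>)
  qed
  have "\<forall>a. yv^n * a = a * yv^n"
  proof
    fix a
    have "scale (q^(0+1)) (Eh 0 (Suc (n-1)) a) = Eh (Suc 0) (n-1) a * wv - wv * Eh 0 (n-1) a"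
      using RR by (simp only: RR_def)
    moreover have "Eh 0 (Suc (n-1)) a = Phi 0 (Suc (n-1)) a" using n0 by (simp add: Eh_def Phi_def)
    ultimately show "yv^n * a = a * yv^n" using EP nm1 by (intro Phi_R_central) simp
  qed
  then show ?thesis using EP by blast
qed

lemma backward:
  assumes EP: "\<forall>b m a. m < n \<longrightarrow> Eh b m a = Phi b m a" and cen: "\<forall>a. yv^n * a = a * yv^n"
  shows "partial_action n q scale act"
proof -
  have n0: "0 < n" using n2 by auto
  have E: "Eh b m a = Phi b m a" for b m a
    using EP by (cases "m < n") (auto simp: Eh_def Phi_def)
  have base: "Base Eh" using Phi_base by (simp add: Base_def E)
  have RR: "RR Eh" unfolding RR_def
  proof (intro allI)
    fix b m a
    show "scale (q^(b+1)) (Eh b (Suc m) a) = Eh (Suc b) m a * wv - wv * Eh b m a"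
    proof (cases "Suc m \<le> n")
      case True
      then have "Suc m < n \<or> (Suc m = n \<and> yv^n * a = a * yv^n)" using cen by auto
      then show ?thesis unfolding E by (rule Phi_R)
    next
      case False then show ?thesis by simp
    qed
  qed
  have c1: C1 unfolding C1_def
  proof
    fix a show "act 0 0 a = a" using base[unfolded Base_def, rule_format, of 0 a] n0 by (simp add: Eh_def)
  qed
  have c2: C2 unfolding C2_def
  proof (intro allI impI)
    fix i j a b assume ij: "i < n" "j < n"
    have "Eh i j (a * b) = (\<Sum>l\<le>j. scale (qbinom q j l) (Eh (i+l) (j-l) a * Eh i l b))"
      using C2_Eh[OF base RR ij(2)] .
    also have "\<dots> = (\<Sum>l\<le>j. scale (qbinom q j l) (act ((i+l) mod n) (j-l) a * act i l b))"
      using ij by (intro sum.cong refl) (auto simp: Eh_def)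
    finally show "act i j (a * b) = (\<Sum>l\<le>j. scale (qbinom q j l) (act ((i+l) mod n) (j-l) a * act i l b))"
      using ij by (simp add: Eh_def)
  qed
  have c3: C3 unfolding C3_def
  proof (intro allI impI)
    fix i j k m a assume ij: "i < n" "j < n" and km: "k < n" "m < n"
    have "Eh i j (Eh k m a) = (\<Sum>l\<le>j. scale (qbinom q j l) (Eh (i+l) (j-l) 1 * scale (q^(l*k)) (Eh (i+k) (l+m) a)))"
      using C3_Eh[OF base RR ij(2)] .
    also have "\<dots> = (\<Sum>l\<le>j. scale (qbinom q j l) (act ((i+l) mod n) (j-l) 1 * MB (i,l) (k,m) a))"
      using ij by (intro sum.cong refl) (auto simp: Eh_def MB_def)
    finally show "act i j (act k m a) = (\<Sum>l\<le>j. scale (qbinom q j l) (act ((i+l) mod n) (j-l) 1 * MB (i,l) (k,m) a))"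
      using ij km by (simp add: Eh_def)
  qed
  show ?thesis using PA_if[OF c1 c2 c3] .
qed

lemma main:
  assumes A1: "act 0 0 1 = 1" and A2: "\<And>i. 1 \<le> i \<Longrightarrow> i < n \<Longrightarrow> act i 0 1 = 0"
  shows "partial_action n q scale act \<longleftrightarrow>
    ((act 0 1 1) ^ n \<in> center \<and>
     (\<forall>a i j. i < n \<longrightarrow> j < n \<longrightarrow>
        act ((n - i) mod n) j a =
          scale ((-1) ^ i * q ^ (i * (i + 1) div 2) * qbinom q j i)
            ((act 0 1 1) ^ (j - i) * a * (act 0 1 1) ^ i)))"
    (is "?L \<longleftrightarrow> ?C \<and> ?F")
proof
  assume PA: ?L
  from forward[OF A1 A2 PA] have EP: "\<forall>b m a. m < n \<longrightarrow> Eh b m a = Phi b m a"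
    and cen: "\<forall>a. yv^n * a = a * yv^n" by auto
  have ?C using cen by (simp add: center_def yv_def)
  moreover have ?F
  proof (intro allI impI)
    fix a i j assume ij: "i < n" "j < n"
    have "act ((n - i) mod n) j a = Eh ((n - i) mod n) j a" using ij by (simp add: Eh_def)
    also have "\<dots> = Phi ((n - i) mod n) j a" using EP ij by simp
    finally show "act ((n - i) mod n) j a = scale ((-1) ^ i * q ^ (i * (i + 1) div 2) * qbinom q j i)
            ((act 0 1 1) ^ (j - i) * a * (act 0 1 1) ^ i)"
      using ij by (simp add: Phi_def rr_inv cc_def yv_def)
  qed
  ultimately show "?C \<and> ?F" ..
next
  assume CF: "?C \<and> ?F"
  have cen: "\<forall>a. yv^n * a = a * yv^n" using CF by (simp add: center_def yv_def)
  have EP: "\<forall>b m a. m < n \<longrightarrow> Eh b m a = Phi b m a"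
  proof (intro allI impI)
    fix b m a assume m: "m < n"
    have r: "rr b < n" by (rule rr_lt)
    have "act ((n - rr b) mod n) m a = scale (cc (rr b) m) (yv^(m - rr b) * a * yv^(rr b))"
      using CF r m by (simp add: cc_def yv_def)
    then show "Eh b m a = Phi b m a" using m by (simp add: Eh_def Phi_def rr_inv2)
  qed
  show ?L by (rule backward[OF EP cen])
qed

end

theorem corollary3p11:
  fixes n :: nat and q :: "'k::field"
    and scale :: "'k \<Rightarrow> 'a::ring_1 \<Rightarrow> 'a"
    and act :: "nat \<Rightarrow> nat \<Rightarrow> 'a \<Rightarrow> 'a"
  assumes "n \<ge> 2"
    and "prim_root n q"
    and "k_algebra scale"
    and "\<And>i j. Vector_Spaces.linear scale scale (act i j)"
    and "act 0 0 1 = 1"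
    and "\<And>i. 1 \<le> i \<Longrightarrow> i < n \<Longrightarrow> act i 0 1 = 0"
  shows "partial_action n q scale act \<longleftrightarrow>
    ((act 0 1 1) ^ n \<in> center \<and>
     (\<forall>a i j. i < n \<longrightarrow> j < n \<longrightarrow>
        act ((n - i) mod n) j a =
          scale ((-1) ^ i * q ^ (i * (i + 1) div 2) * qbinom q j i)
            ((act 0 1 1) ^ (j - i) * a * (act 0 1 1) ^ i)))"
proof -
  interpret S n q scale act
    using assms(1-4) by (rule S.intro)
  show ?thesis using main[OF assms(5,6)] .
qed

end
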